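(* Let $n \ge 2$ and let $Q(x) = x_1x_2 + x_3x_4 + \cdots + x_{2n-1}x_{2n}$ be the hyperbolic quadratic form on $V(2n,2)$, with associated symmetric bilinear form $B(x,y) = Q(x+y)-Q(x)-Q(y)$ and orthogonality $\perp$ with respect to $B$. Let $\Pi$ and $\Sigma$ be two totally singular $n$-dimensional subspaces with $\Pi \cap \Sigma = 0$. For a non-singular point $X$, put $G = X^\perp \cap \Pi$, $H = X^\perp \cap \Sigma$, $P = G^\perp \cap \Sigma$, and define $f(X) = (P,H)$. Then $f$ is a bijection from the set of non-singular points of $V(2n,2)$ (with respect to $Q$) onto the set of point-hyperplane antiflags of $\Sigma \cong V(n,2)$.
   Context: Points are $1$-dimensional subspaces. A point $\langle x\rangle$ is singular if $Q(x)=0$, non-singular otherwise; a subspace is totally singular if all its points are singular. A point-hyperplane antiflag of $\Sigma$ is a pair $(P,H)$ with $P$ a $1$-dimensional subspace of $\Sigma$, $H$ an $(n-1)$-dimensional subspace of $\Sigma$, and $P \not\subseteq H$. *)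

theory Defs
  imports Complex_Main "HOL-Library.Z2" "HOL-Library.Function_Algebras"
begin

text \<open>Vectors of V(m,2) are represented as functions nat => bit (bit = GF(2))
  vanishing outside the coordinates 0..m-1; coordinates x_1..x_2n of the paper
  are x 0 .. x (2n-1).\<close>

type_synonym vec2 = "nat \<Rightarrow> bit"

definition scale2 :: "bit \<Rightarrow> vec2 \<Rightarrow> vec2" where
  "scale2 c x = (\<lambda>i. c * x i)"

lemma vector_space_scale2: "vector_space scale2"
  by unfold_locales (auto simp: scale2_def fun_eq_iff algebra_simps)

definition Vsp :: "nat \<Rightarrow> vec2 set" where
  "Vsp m = {x. \<forall>i\<ge>m. x i = 0}"

abbreviation subsp :: "vec2 set \<Rightarrow> bool" where
  "subsp S \<equiv> module.subspace scale2 S"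

abbreviation span2 :: "vec2 set \<Rightarrow> vec2 set" where
  "span2 S \<equiv> module.span scale2 S"

abbreviation dim2 :: "vec2 set \<Rightarrow> nat" where
  "dim2 S \<equiv> vector_space.dim scale2 S"

definition Qhyp :: "nat \<Rightarrow> vec2 \<Rightarrow> bit" where
  "Qhyp n x = (\<Sum>i<n. x (2*i) * x (2*i+1))"

definition Bhyp :: "nat \<Rightarrow> vec2 \<Rightarrow> vec2 \<Rightarrow> bit" where
  "Bhyp n x y = Qhyp n (x + y) - Qhyp n x - Qhyp n y"

definition perp :: "nat \<Rightarrow> vec2 set \<Rightarrow> vec2 set" where
  "perp n S = {y \<in> Vsp (2*n). \<forall>x\<in>S. Bhyp n y x = 0}"

definition totally_singular :: "nat \<Rightarrow> vec2 set \<Rightarrow> bool" where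
  "totally_singular n S \<longleftrightarrow> (\<forall>x\<in>S. Qhyp n x = 0)"

definition nonsingular_points :: "nat \<Rightarrow> vec2 set set" where
  "nonsingular_points n = {span2 {x} | x. x \<in> Vsp (2*n) \<and> x \<noteq> 0 \<and> Qhyp n x \<noteq> 0}"

definition antiflags :: "nat \<Rightarrow> vec2 set \<Rightarrow> (vec2 set \<times> vec2 set) set" where
  "antiflags n \<Sigma> = {(P, H). subsp P \<and> P \<subseteq> \<Sigma> \<and> dim2 P = 1 \<and>
                            subsp H \<and> H \<subseteq> \<Sigma> \<and> dim2 H = n - 1 \<and> \<not> P \<subseteq> H}"

definition fmap :: "nat \<Rightarrow> vec2 set \<Rightarrow> vec2 set \<Rightarrow> vec2 set \<Rightarrow> vec2 set \<times> vec2 set" where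
  "fmap n \<Pi> \<Sigma> X = (let G = perp n X \<inter> \<Pi>; H = perp n X \<inter> \<Sigma>; P = perp n G \<inter> \<Sigma> in (P, H))"

end

theory Submission
  imports Defs
begin
declare add_bit_eq_xor[simp del] mult_bit_eq_and[simp del]

interpretation V: vector_space scale2 by (rule vector_space_scale2)

lemma bit_add_self[simp]: "(b::bit) + b = 0"
  by (cases b) simp_all

lemma vec_add_self[simp]: "(x::vec2) + x = 0"
  by (simp add: fun_eq_iff)

lemma vec_minus[simp]: "(x::vec2) - y = x + y"
  by (simp add: fun_eq_iff)

lemma vec_add_cancel[simp]: "(x::vec2) + (x + y) = y"
  by (metis add.assoc add_0 vec_add_self)

lemma bit_ac: "(x::bit) + z + (y + z) = x + y"
  by (cases x; cases y; cases z) simp_all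

lemma vec_ac: "(x::vec2) + z + (y + z) = x + y"
  by (rule ext) (simp only: plus_fun_apply bit_ac)

lemma vec_two_mult[simp]: "2 * (x::vec2) = 0"
  by (subst mult_2) (rule vec_add_self)

lemma scale2_01[simp]: "scale2 0 b = 0" "scale2 1 b = b"
  by (simp_all add: scale2_def fun_eq_iff)

lemma bit_cases2: "(b::bit) = 0 \<or> b = 1" by (cases b) simp_all

lemma Bhyp_formula: "Bhyp n x y = (\<Sum>i<n. x (2*i) * y (2*i+1) + y (2*i) * x (2*i+1))"
  unfolding Bhyp_def Qhyp_def
  by (simp add: sum.distrib[symmetric] sum_subtractf[symmetric] algebra_simps)

lemma Bsym: "Bhyp n x y = Bhyp n y x"
  unfolding Bhyp_formula by (simp add: algebra_simps)

lemma Badd: "Bhyp n (x + x') y = Bhyp n x y + Bhyp n x' y"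
  unfolding Bhyp_formula by (simp add: algebra_simps sum.distrib)

lemma Badd2: "Bhyp n y (x + x') = Bhyp n y x + Bhyp n y x'"
  using Badd Bsym by metis

lemma Bzero[simp]: "Bhyp n 0 y = 0" "Bhyp n y 0 = 0"
  unfolding Bhyp_formula by simp_all

lemma Qadd: "Qhyp n (x + y) = Qhyp n x + Qhyp n y + Bhyp n x y"
  unfolding Bhyp_def by (simp add: algebra_simps)

lemma Bself[simp]: "Bhyp n x x = 0"
  unfolding Bhyp_def by (simp add: Qhyp_def)

lemma span_single: "span2 {x} = {0, x}"
  unfolding V.span_singleton scale2_def
  by (auto simp: fun_eq_iff)

lemma subsp_iff: "subsp S \<longleftrightarrow> 0 \<in> S \<and> (\<forall>x\<in>S. \<forall>y\<in>S. x + y \<in> S)"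
  unfolding V.subspace_def scale2_def
proof safe
  fix c x assume "0 \<in> S" "x \<in> S"
  moreover have "(\<lambda>i. c * x i) = (if c = 0 then 0 else x)" by (cases c) (auto simp: fun_eq_iff)
  ultimately show "(\<lambda>i. c * x i) \<in> S" by simp
qed

lemma Vsp_add: "x \<in> Vsp m \<Longrightarrow> y \<in> Vsp m \<Longrightarrow> x + y \<in> Vsp m"
  by (simp add: Vsp_def)

lemma Vsp_zero[simp]: "0 \<in> Vsp m"
  by (simp add: Vsp_def)

lemma subsp_Vsp: "subsp (Vsp m)"
  unfolding subsp_iff by (simp add: Vsp_add)

lemma bit_UNIV: "(UNIV::bit set) = {0,1}"
  using bit_cases2 by auto

lemma finite_Vsp: "finite (Vsp m)"
proof -
  have "Vsp m = {f. \<forall>x. (x \<in> {..<m} \<longrightarrow> f x \<in> (UNIV::bit set)) \<and> (x \<notin> {..<m} \<longrightarrow> f x = 0)}"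
    by (auto simp: Vsp_def)
  then show ?thesis using finite_set_of_finite_funs[of "{..<m}" "UNIV::bit set" 0]
    by (simp add: bit_UNIV)
qed

definition ee :: "nat \<Rightarrow> vec2" where "ee m = (\<lambda>i. if i = m then 1 else 0)"

lemma card_Vsp: "card (Vsp m) = 2 ^ m"
proof (induction m)
  case 0
  have "Vsp 0 = {0}" by (auto simp: Vsp_def fun_eq_iff)
  then show ?case by simp
next
  case (Suc m)
  have eq: "Vsp (Suc m) = Vsp m \<union> (\<lambda>x. x + ee m) ` Vsp m"
  proof (intro equalityI subsetI)
    fix x assume x: "x \<in> Vsp (Suc m)"
    show "x \<in> Vsp m \<union> (\<lambda>x. x + ee m) ` Vsp m"
    proof (cases "x m = 0")
      case True
      then have "x \<in> Vsp m" using x by (auto simp: Vsp_def) (metis le_antisym not_less_eq_eq)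
      then show ?thesis by simp
    next
      case False
      then have "x m = 1" by simp
      then have "x + ee m \<in> Vsp m" using x by (auto simp: Vsp_def ee_def)
      moreover have "x = (x + ee m) + ee m" by (simp add: add.assoc)
      ultimately show ?thesis by blast
    qed
  next
    fix x assume "x \<in> Vsp m \<union> (\<lambda>x. x + ee m) ` Vsp m"
    then show "x \<in> Vsp (Suc m)" by (auto simp: Vsp_def ee_def)
  qed
  have disj: "Vsp m \<inter> (\<lambda>x. x + ee m) ` Vsp m = {}"
    by (auto simp: Vsp_def ee_def)
  have inj: "inj_on (\<lambda>x. x + ee m) (Vsp m)" by (auto simp: inj_on_def)
  have "card (Vsp (Suc m)) = card (Vsp m) + card ((\<lambda>x. x + ee m) ` Vsp m)"
    unfolding eq by (rule card_Un_disjoint) (auto simp: finite_Vsp disj)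
  also have "\<dots> = 2 ^ Suc m" using Suc card_image[OF inj] by simp
  finally show ?case .
qed

lemma span_insert2: "span2 (insert b F) = span2 F \<union> (\<lambda>x. x + b) ` span2 F"
proof -
  have "span2 (insert b F) = {x. \<exists>k. x - scale2 k b \<in> span2 F}" by (rule V.span_insert)
  also have "\<dots> = span2 F \<union> (\<lambda>x. x + b) ` span2 F"
  proof (intro equalityI subsetI)
    fix x assume "x \<in> {x. \<exists>k. x - scale2 k b \<in> span2 F}"
    then obtain k where k: "x + scale2 k b \<in> span2 F" by auto
    show "x \<in> span2 F \<union> (\<lambda>x. x + b) ` span2 F"
    proof (cases k)
      case zero then show ?thesis using k by simp
    next
      case one
      then have "x + b \<in> span2 F" using k by simp
      moreover have "x = (x + b) + b" by (simp add: add.assoc)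
      ultimately show ?thesis by blast
    qed
  next
    fix x assume "x \<in> span2 F \<union> (\<lambda>x. x + b) ` span2 F"
    then show "x \<in> {x. \<exists>k. x - scale2 k b \<in> span2 F}"
    proof
      assume "x \<in> span2 F"
      then show ?thesis by (auto intro!: exI[of _ 0])
    next
      assume "x \<in> (\<lambda>x. x + b) ` span2 F"
      then obtain y where "y \<in> span2 F" "x = y + b" by auto
      then show ?thesis by (auto intro!: exI[of _ 1] simp: add.assoc)
    qed
  qed
  finally show ?thesis .
qed

lemma card_span_indep:
  assumes "finite F" "V.independent F" "F \<subseteq> Vsp m"
  shows "card (span2 F) = 2 ^ card F"
  using assms
proof (induction F rule: finite_induct)
  case empty
  then show ?case by (simp add: V.span_empty)
next
  case (insert b F)
  have ind: "V.independent F" and nb: "b \<notin> span2 F"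
    using insert.prems(1) insert.hyps(2) by (auto simp: V.independent_insert)
  have IH: "card (span2 F) = 2 ^ card F" using insert ind by auto
  have sub: "span2 F \<subseteq> Vsp m"
    using insert.prems(2) by (intro V.span_minimal subsp_Vsp) auto
  then have fin: "finite (span2 F)" using finite_Vsp finite_subset by blast
  have disj: "span2 F \<inter> (\<lambda>x. x + b) ` span2 F = {}"
  proof (rule ccontr)
    assume "span2 F \<inter> (\<lambda>x. x + b) ` span2 F \<noteq> {}"
    then obtain y where y: "y \<in> span2 F" "y + b \<in> span2 F" by auto
    then have "y + (y + b) \<in> span2 F" by (rule V.span_add)
    then show False using nb by (simp only: vec_add_cancel)
  qed
  have inj: "inj_on (\<lambda>x. x + b) (span2 F)" by (auto simp: inj_on_def)
  have "card (span2 (insert b F)) = card (span2 F) + card ((\<lambda>x. x + b) ` span2 F)"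
    unfolding span_insert2 by (rule card_Un_disjoint) (auto simp: fin disj)
  also have "\<dots> = 2 ^ card (insert b F)" using IH card_image[OF inj] insert.hyps by simp
  finally show ?case .
qed

lemma card_subsp:
  assumes "subsp S" "S \<subseteq> Vsp m"
  shows "card S = 2 ^ dim2 S" "finite S"
proof -
  show finS: "finite S" using assms finite_Vsp finite_subset by blast
  obtain B where B: "B \<subseteq> S" "V.independent B" "S \<subseteq> V.span B" "card B = dim2 S"
    by (rule V.basis_exists)
  have "V.span B = S" using B assms(1) V.span_minimal by blast
  moreover have "finite B" using B(1) finS finite_subset by blast
  ultimately show "card S = 2 ^ dim2 S" using card_span_indep[of B m] B assms by auto
qed


lemma vec_eq_of_sum0: "(a::vec2) + b = 0 \<Longrightarrow> a = b"
  by (metis add_0 vec_add_cancel add.commute)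

lemma tsB: "subsp S \<Longrightarrow> totally_singular n S \<Longrightarrow> u \<in> S \<Longrightarrow> v \<in> S \<Longrightarrow> Bhyp n u v = 0"
  using Qadd[of n u v] by (auto simp: totally_singular_def subsp_iff)

lemma nondeg:
  assumes "y \<in> Vsp (2*n)" "\<And>z. z \<in> Vsp (2*n) \<Longrightarrow> Bhyp n y z = 0"
  shows "y = 0"
proof (rule ext)
  fix j
  show "y j = 0 j"
  proof (cases "j < 2*n")
    case False then show ?thesis using assms(1) by (simp add: Vsp_def)
  next
    case True
    obtain i where i: "j = 2*i \<or> j = 2*i+1" by (metis odd_two_times_div_two_succ dvd_mult_div_cancel)
    then have "i < n" using True by auto
    from i show ?thesis
    proof
      assume j: "j = 2*i"
      have "ee (2*i+1) \<in> Vsp (2*n)" using \<open>i<n\<close> by (auto simp: Vsp_def ee_def)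
      then have "Bhyp n y (ee (2*i+1)) = 0" by (rule assms(2))
      moreover have "Bhyp n y (ee (2*i+1)) = (\<Sum>k<n. if k = i then y (2*k) else 0)"
        unfolding Bhyp_formula by (intro sum.cong refl) (auto simp: ee_def; presburger)
      moreover have "(\<Sum>k<n. if k = i then y (2*k) else 0) = y (2*i)" using \<open>i<n\<close> by simp
      ultimately show ?thesis using j by simp
    next
      assume j: "j = 2*i+1"
      have "ee (2*i) \<in> Vsp (2*n)" using \<open>i<n\<close> by (auto simp: Vsp_def ee_def)
      then have "Bhyp n y (ee (2*i)) = 0" by (rule assms(2))
      moreover have "Bhyp n y (ee (2*i)) = (\<Sum>k<n. if k = i then y (2*k+1) else 0)"
        unfolding Bhyp_formula by (intro sum.cong refl) (auto simp: ee_def; presburger)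
      moreover have "(\<Sum>k<n. if k = i then y (2*k+1) else 0) = y (2*i+1)" using \<open>i<n\<close> by simp
      ultimately show ?thesis using j by simp
    qed
  qed
qed

lemma card_le_kernel:
  fixes l :: "vec2 \<Rightarrow> bit"
  assumes "finite A" "\<And>x y. x \<in> A \<Longrightarrow> y \<in> A \<Longrightarrow> x + y \<in> A"
    and "\<And>x y. l (x + y) = l x + (l y :: bit)"
  shows "card A \<le> 2 * card {x\<in>A. l x = 0}"
proof (cases "\<exists>t\<in>A. l t \<noteq> 0")
  case False
  then have "A = {x\<in>A. l x = 0}" by auto
  then show ?thesis by (metis le_add2 mult_2)
next
  case True
  then obtain t where t: "t \<in> A" "l t = 1" by auto
  let ?K = "{x\<in>A. l x = 0}"
  have "A \<subseteq> ?K \<union> (\<lambda>y. y + t) ` ?K"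
  proof
    fix x assume x: "x \<in> A"
    show "x \<in> ?K \<union> (\<lambda>y. y + t) ` ?K"
    proof (cases "l x = 0")
      case True then show ?thesis using x by auto
    next
      case False
      then have "x + t \<in> ?K" using x t assms(2,3) by auto
      moreover have "x = (x + t) + t" by (simp add: add.assoc)
      ultimately show ?thesis by blast
    qed
  qed
  then have "card A \<le> card (?K \<union> (\<lambda>y. y + t) ` ?K)"
    using assms(1) by (intro card_mono) auto
  also have "\<dots> \<le> card ?K + card ((\<lambda>y. y + t) ` ?K)" by (rule card_Un_le)
  also have "\<dots> \<le> 2 * card ?K" using card_image_le[of ?K "\<lambda>y. y + t"] assms(1) by simp
  finally show ?thesis .
qed

lemma card_le_kernels:
  assumes "finite F" "finite A" "\<And>x y. x \<in> A \<Longrightarrow> y \<in> A \<Longrightarrow> x + y \<in> A"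
  shows "card A \<le> 2 ^ card F * card {a\<in>A. \<forall>h\<in>F. Bhyp n h a = 0}"
  using assms(1)
proof (induction F rule: finite_induct)
  case empty then show ?case by simp
next
  case (insert h F)
  let ?K = "{a\<in>A. \<forall>h\<in>F. Bhyp n h a = 0}"
  have "card ?K \<le> 2 * card {x\<in>?K. Bhyp n h x = 0}"
    by (rule card_le_kernel) (use assms in \<open>auto simp: Badd2\<close>)
  moreover have "{x\<in>?K. Bhyp n h x = 0} = {a\<in>A. \<forall>h\<in>insert h F. Bhyp n h a = 0}" by auto
  ultimately show ?case using insert by (simp add: mult_le_mono2 order_trans)
qed


context
  fixes n :: nat and Pi Sg :: "vec2 set"
  assumes n2: "n \<ge> 2"
    and sPi: "subsp Pi" and Pi_V: "Pi \<subseteq> Vsp (2*n)" and dPi: "dim2 Pi = n" and tPi: "totally_singular n Pi"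
    and sSg: "subsp Sg" and Sg_V: "Sg \<subseteq> Vsp (2*n)" and dSg: "dim2 Sg = n" and tSg: "totally_singular n Sg"
    and disj: "Pi \<inter> Sg = {0}"
begin

lemma cardPi: "card Pi = 2^n" "finite Pi"
  using card_subsp[OF sPi Pi_V] dPi by auto

lemma cardSg: "card Sg = 2^n" "finite Sg"
  using card_subsp[OF sSg Sg_V] dSg by auto

lemma BPi: "u \<in> Pi \<Longrightarrow> v \<in> Pi \<Longrightarrow> Bhyp n u v = 0"
  by (rule tsB[OF sPi tPi])

lemma BSg: "u \<in> Sg \<Longrightarrow> v \<in> Sg \<Longrightarrow> Bhyp n u v = 0"
  by (rule tsB[OF sSg tSg])

lemma addPi: "u \<in> Pi \<Longrightarrow> v \<in> Pi \<Longrightarrow> u + v \<in> Pi"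
  using sPi by (simp add: subsp_iff)

lemma addSg: "u \<in> Sg \<Longrightarrow> v \<in> Sg \<Longrightarrow> u + v \<in> Sg"
  using sSg by (simp add: subsp_iff)

lemma zeroPi: "0 \<in> Pi" using sPi by (simp add: subsp_iff)
lemma zeroSg: "0 \<in> Sg" using sSg by (simp add: subsp_iff)

lemma decomp:
  assumes "x \<in> Vsp (2*n)"
  obtains a s where "a \<in> Pi" "s \<in> Sg" "x = a + s"
proof -
  let ?f = "\<lambda>(a, s). a + s"
  have inj: "inj_on ?f (Pi \<times> Sg)"
  proof (rule inj_onI, clarsimp)
    fix a s a' s' assume h: "a \<in> Pi" "s \<in> Sg" "a' \<in> Pi" "s' \<in> Sg" "a + s = a' + s'"
    have "a + a' = s + s'"
    proof -
      have "a + a' = (a + s) + (a' + s)" by (rule vec_ac[symmetric])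
      also have "\<dots> = (a' + s') + (a' + s)" using h(5) by simp
      also have "\<dots> = s' + s" by (simp only: add.commute[of a'] vec_ac)
      finally show ?thesis by (simp add: add.commute)
    qed
    moreover have "a + a' \<in> Pi" "s + s' \<in> Sg" using h addPi addSg by auto
    ultimately have "a + a' = 0" "s + s' = 0" using disj by auto
    then show "a = a' \<and> s = s'" using vec_eq_of_sum0 by blast
  qed
  have sub: "?f ` (Pi \<times> Sg) \<subseteq> Vsp (2*n)" using Pi_V Sg_V by (auto intro!: Vsp_add)
  have "card (?f ` (Pi \<times> Sg)) = 2^n * 2^n"
    using card_image[OF inj] cardPi cardSg by (simp add: card_cartesian_product)
  also have "\<dots> = card (Vsp (2*n))" by (simp add: card_Vsp power_add[symmetric] mult_2)
  finally have "?f ` (Pi \<times> Sg) = Vsp (2*n)"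
    using card_subset_eq[OF finite_Vsp sub] by simp
  then have "x \<in> ?f ` (Pi \<times> Sg)" using assms by simp
  then show ?thesis using that by auto
qed

lemma perp0:
  assumes "y \<in> Vsp (2*n)" "\<And>a. a \<in> Pi \<Longrightarrow> Bhyp n y a = 0" "\<And>s. s \<in> Sg \<Longrightarrow> Bhyp n y s = 0"
  shows "y = 0"
proof (rule nondeg[OF assms(1)])
  fix z assume "z \<in> Vsp (2*n)"
  then obtain a s where "a \<in> Pi" "s \<in> Sg" "z = a + s" by (rule decomp)
  then show "Bhyp n y z = 0" using assms by (simp add: Badd2)
qed

lemma ker_split:
  assumes "a \<in> Pi" "s \<in> Sg" "Bhyp n s a = 1"
  shows "Sg = {h\<in>Sg. Bhyp n h a = 0} \<union> (\<lambda>h. h + s) ` {h\<in>Sg. Bhyp n h a = 0}"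
    and "{h\<in>Sg. Bhyp n h a = 0} \<inter> (\<lambda>h. h + s) ` {h\<in>Sg. Bhyp n h a = 0} = {}"
proof -
  show "Sg = {h\<in>Sg. Bhyp n h a = 0} \<union> (\<lambda>h. h + s) ` {h\<in>Sg. Bhyp n h a = 0}"
  proof (intro equalityI subsetI)
    fix h assume h: "h \<in> Sg"
    show "h \<in> {h\<in>Sg. Bhyp n h a = 0} \<union> (\<lambda>h. h + s) ` {h\<in>Sg. Bhyp n h a = 0}"
    proof (cases "Bhyp n h a = 0")
      case True then show ?thesis using h by auto
    next
      case False
      then have "h + s \<in> {h\<in>Sg. Bhyp n h a = 0}" using h assms addSg by (auto simp: Badd)
      moreover have "h = (h + s) + s" by (simp add: add.assoc)
      ultimately show ?thesis by blast
    qed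
  qed (use assms addSg in auto)
  show "{h\<in>Sg. Bhyp n h a = 0} \<inter> (\<lambda>h. h + s) ` {h\<in>Sg. Bhyp n h a = 0} = {}"
    using assms by (auto simp: Badd)
qed

lemma ker_card:
  assumes "a \<in> Pi" "s \<in> Sg" "Bhyp n s a = 1"
  shows "card {h\<in>Sg. Bhyp n h a = 0} = 2^(n-1)"
proof -
  let ?K = "{h\<in>Sg. Bhyp n h a = 0}"
  have fin: "finite ?K" using cardSg by simp
  have inj: "inj_on (\<lambda>h. h + s) ?K" by (auto simp: inj_on_def)
  have "2^n = card (?K \<union> (\<lambda>h. h + s) ` ?K)" using ker_split[OF assms] cardSg by simp
  also have "\<dots> = 2 * card ?K"
    using card_Un_disjoint[OF fin finite_imageI[OF fin] ker_split(2)[OF assms]] card_image[OF inj] by simp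
  moreover have "(2::nat)^n = 2 * 2^(n-1)" using n2 by (cases n) auto
  ultimately show ?thesis by simp
qed

lemma ker_subsp: "subsp {h\<in>Sg. Bhyp n h a = 0}"
  unfolding subsp_iff using zeroSg addSg by (auto simp: Badd)

lemma ker_dim:
  assumes "a \<in> Pi" "s \<in> Sg" "Bhyp n s a = 1"
  shows "dim2 {h\<in>Sg. Bhyp n h a = 0} = n - 1"
proof -
  have "card {h\<in>Sg. Bhyp n h a = 0} = 2 ^ dim2 {h\<in>Sg. Bhyp n h a = 0}"
    by (rule card_subsp(1)[OF ker_subsp]) (use Sg_V in auto)
  then have "2 ^ dim2 {h\<in>Sg. Bhyp n h a = 0} = (2::nat)^(n-1)"
    using ker_card[OF assms] by auto
  then show ?thesis by (simp add: power_inject_exp)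
qed


lemma perp_point: "perp n {0, x} = {y\<in>Vsp(2*n). Bhyp n y x = 0}"
  by (auto simp: perp_def)

lemma fmap_eq:
  assumes a: "a \<in> Pi" and s: "s \<in> Sg" and as: "Bhyp n a s = 1"
  shows "fmap n Pi Sg {0, a + s} = ({0, s}, {h\<in>Sg. Bhyp n h a = 0})"
proof -
  have G: "perp n {0, a+s} \<inter> Pi = {g\<in>Pi. Bhyp n g s = 0}"
    using Pi_V BPi a by (auto simp: perp_point Badd2)
  have H: "perp n {0, a+s} \<inter> Sg = {h\<in>Sg. Bhyp n h a = 0}"
    using Sg_V BSg s by (auto simp: perp_point Badd2)
  have P: "perp n {g\<in>Pi. Bhyp n g s = 0} \<inter> Sg = {0, s}"
  proof (intro equalityI subsetI)
    fix p assume "p \<in> perp n {g\<in>Pi. Bhyp n g s = 0} \<inter> Sg"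
    then have pS: "p \<in> Sg" and pV: "p \<in> Vsp (2*n)"
      and pp: "\<And>g. g \<in> Pi \<Longrightarrow> Bhyp n g s = 0 \<Longrightarrow> Bhyp n p g = 0"
      by (auto simp: perp_def)
    have key: "Bhyp n p a' = Bhyp n p a * Bhyp n a' s" if a': "a' \<in> Pi" for a'
    proof (cases "Bhyp n a' s = 0")
      case True then show ?thesis using pp a' by simp
    next
      case False
      then have "Bhyp n (a' + a) s = 0" using as by (simp add: Badd)
      then have "Bhyp n p (a' + a) = 0" using pp a' a addPi by blast
      then have "Bhyp n p a' = Bhyp n p a"
        by (simp add: Badd2) (metis add.commute vec_add_self vec_eq_of_sum0 bit_add_self add_0 add.assoc)
      then show ?thesis using False by simp
    qed
    show "p \<in> {0, s}"
    proof (cases "Bhyp n p a = 0")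
      case True
      have "p = 0"
        by (rule perp0[OF pV]) (use key True pS BSg in auto)
      then show ?thesis by simp
    next
      case False
      then have pa: "Bhyp n p a = 1" by simp
      have "p + s = 0"
      proof (rule perp0)
        show "p + s \<in> Vsp (2*n)" using pV s Sg_V by (auto intro!: Vsp_add)
      next
        fix a' assume a': "a' \<in> Pi"
        show "Bhyp n (p + s) a' = 0" using key[OF a'] pa by (simp add: Badd Bsym[of n s])
      next
        fix s' assume "s' \<in> Sg"
        then show "Bhyp n (p + s) s' = 0" using BSg pS s by (simp add: Badd)
      qed
      then show ?thesis using vec_eq_of_sum0 by blast
    qed
  next
    fix p assume "p \<in> {0, s}"
    then show "p \<in> perp n {g\<in>Pi. Bhyp n g s = 0} \<inter> Sg"
      using s Sg_V zeroSg by (auto simp: perp_def Bsym[of n s])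
  qed
  show ?thesis unfolding fmap_def Let_def G H P ..
qed

lemma nsp_decomp:
  assumes "x \<in> Vsp (2*n)" "Qhyp n x \<noteq> 0"
  obtains a s where "a \<in> Pi" "s \<in> Sg" "x = a + s" "Bhyp n a s = 1"
proof -
  obtain a s where as: "a \<in> Pi" "s \<in> Sg" "x = a + s" using decomp[OF assms(1)] .
  have "Qhyp n x = Bhyp n a s" using as tPi tSg Qadd[of n a s] by (simp add: totally_singular_def)
  then show ?thesis using that as assms(2) by simp
qed

lemma main: "bij_betw (fmap n Pi Sg) (nonsingular_points n) (antiflags n Sg)"
proof (rule bij_betwI')
  fix X Y assume "X \<in> nonsingular_points n" "Y \<in> nonsingular_points n"
  then obtain x y where x: "X = {0, x}" "x \<in> Vsp (2*n)" "Qhyp n x \<noteq> 0"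
    and y: "Y = {0, y}" "y \<in> Vsp (2*n)" "Qhyp n y \<noteq> 0"
    by (auto simp: nonsingular_points_def span_single)
  obtain a s where as: "a \<in> Pi" "s \<in> Sg" "x = a + s" "Bhyp n a s = 1"
    using nsp_decomp[OF x(2,3)] .
  obtain a' s' where as': "a' \<in> Pi" "s' \<in> Sg" "y = a' + s'" "Bhyp n a' s' = 1"
    using nsp_decomp[OF y(2,3)] .
  show "fmap n Pi Sg X = fmap n Pi Sg Y \<longleftrightarrow> X = Y"
  proof
    assume "fmap n Pi Sg X = fmap n Pi Sg Y"
    then have e1: "{0, s} = {0, s'}" and e2: "{h\<in>Sg. Bhyp n h a = 0} = {h\<in>Sg. Bhyp n h a' = 0}"
      using fmap_eq[OF as(1,2,4)] fmap_eq[OF as'(1,2,4)] x(1) y(1) as(3) as'(3) by auto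
    have "s \<noteq> 0" "s' \<noteq> 0" using as(4) as'(4) by auto
    then have ss: "s = s'" using e1 by (metis doubleton_eq_iff)
    have "a + a' = 0"
    proof (rule perp0)
      show "a + a' \<in> Vsp (2*n)" using as as' Pi_V by (auto intro!: Vsp_add)
    next
      fix p assume "p \<in> Pi" then show "Bhyp n (a + a') p = 0" using as as' BPi by (simp add: Badd)
    next
      fix h assume h: "h \<in> Sg"
      have "Bhyp n h a = Bhyp n h a'"
      proof (cases "Bhyp n h a = 0")
        case True
        then have "h \<in> {h\<in>Sg. Bhyp n h a' = 0}" using e2 h by blast
        then show ?thesis using True by simp
      next
        case False
        then have "h \<notin> {h\<in>Sg. Bhyp n h a' = 0}" using e2 h by blast
        then have "Bhyp n h a' \<noteq> 0" using h by simp
        then show ?thesis using False by simp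
      qed
      then show "Bhyp n (a + a') h = 0" by (simp add: Badd Bsym[of n _ h])
    qed
    then have "a = a'" by (rule vec_eq_of_sum0)
    then show "X = Y" using x(1) y(1) as(3) as'(3) ss by simp
  qed simp
next
  fix X assume "X \<in> nonsingular_points n"
  then obtain x where x: "X = {0, x}" "x \<in> Vsp (2*n)" "Qhyp n x \<noteq> 0"
    by (auto simp: nonsingular_points_def span_single)
  obtain a s where as: "a \<in> Pi" "s \<in> Sg" "x = a + s" "Bhyp n a s = 1"
    using nsp_decomp[OF x(2,3)] .
  have sa: "Bhyp n s a = 1" using as(4) by (simp add: Bsym)
  have s0: "s \<noteq> 0" using as(4) by auto
  have sub1: "subsp {0, s}" unfolding subsp_iff by auto
  have "card {0, s} = 2 ^ dim2 {0, s}"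
    by (rule card_subsp(1)[OF sub1]) (use as Sg_V in auto)
  then have "2 ^ dim2 {0, s} = (2::nat) ^ 1" using s0 by simp
  then have d1: "dim2 {0, s} = 1" by (simp only: power_inject_exp)
  show "fmap n Pi Sg X \<in> antiflags n Sg"
    unfolding x(1) as(3) fmap_eq[OF as(1,2,4)] antiflags_def
    using sub1 d1 ker_subsp ker_dim[OF as(1,2) sa] sa as(2) zeroSg by auto
next
  fix PH assume "PH \<in> antiflags n Sg"
  then obtain P H where PH: "PH = (P, H)" and sP: "subsp P" and PS: "P \<subseteq> Sg" and dP: "dim2 P = 1"
    and sH: "subsp H" and HS: "H \<subseteq> Sg" and dH: "dim2 H = n - 1" and PH': "\<not> P \<subseteq> H"
    by (auto simp: antiflags_def)
  have "card P = 2" using card_subsp(1)[OF sP, of "2*n"] PS Sg_V dP by auto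
  then obtain u v where uv: "P = {u, v}" "u \<noteq> v" by (auto simp: card_2_iff)
  have "0 \<in> P" using sP by (simp add: subsp_iff)
  then obtain s where Ps: "P = {0, s}" "s \<noteq> 0" using uv by auto
  have sS: "s \<in> Sg" using Ps PS by auto
  have "0 \<in> H" using sH by (simp add: subsp_iff)
  then have sH': "s \<notin> H" using PH' Ps by auto
  have finH: "finite H" "card H = 2^(n-1)"
    using card_subsp[OF sH, of "2*n"] HS Sg_V dH by auto
  have addH: "\<And>x y. x \<in> H \<Longrightarrow> y \<in> H \<Longrightarrow> x + y \<in> H" using sH by (simp add: subsp_iff)
  have SgH: "Sg = H \<union> (\<lambda>h. h + s) ` H"
  proof -
    have sub: "H \<union> (\<lambda>h. h + s) ` H \<subseteq> Sg" using HS sS addSg by auto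
    have dj: "H \<inter> (\<lambda>h. h + s) ` H = {}"
    proof (rule ccontr)
      assume "H \<inter> (\<lambda>h. h + s) ` H \<noteq> {}"
      then obtain h where "h \<in> H" "h + s \<in> H" by auto
      then have "h + (h + s) \<in> H" using addH by blast
      then show False using sH' by simp
    qed
    have inj: "inj_on (\<lambda>h. h + s) H" by (auto simp: inj_on_def)
    have "card (H \<union> (\<lambda>h. h + s) ` H) = 2 * 2^(n-1)"
      using card_Un_disjoint[OF finH(1) finite_imageI[OF finH(1)] dj] card_image[OF inj] finH(2) by simp
    also have "\<dots> = card Sg" using cardSg n2 by (cases n) auto
    finally show ?thesis using card_subset_eq[OF cardSg(2) sub] by simp
  qed
  obtain Bh where Bh: "Bh \<subseteq> H" "V.independent Bh" "H \<subseteq> span2 Bh" "card Bh = dim2 H"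
    by (rule V.basis_exists)
  have finBh: "finite Bh" using Bh(1) finH(1) finite_subset by blast
  let ?K = "{a\<in>Pi. \<forall>h\<in>Bh. Bhyp n h a = 0}"
  have "card Pi \<le> 2 ^ card Bh * card ?K"
    by (rule card_le_kernels[OF finBh cardPi(2) addPi])
  then have "2 * 2^(n-1) \<le> 2^(n-1) * card ?K" using cardPi(1) Bh(4) dH n2 by (cases n) auto
  then have "card ?K \<ge> 2" by simp
  then obtain u v where "u \<in> ?K" "v \<in> ?K" "u \<noteq> v"
    by (metis (no_types, lifting) card_le_Suc_iff numeral_2_eq_2 insertCI)
  then obtain a where aK: "a \<in> ?K" "a \<noteq> 0" by blast
  have aPi: "a \<in> Pi" using aK by simp
  have aH: "Bhyp n h a = 0" if "h \<in> H" for h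
  proof -
    have "span2 Bh \<subseteq> {h. Bhyp n h a = 0}"
      by (rule V.span_minimal) (use aK in \<open>auto simp: subsp_iff Badd\<close>)
    then show ?thesis using that Bh(3) by auto
  qed
  have sa: "Bhyp n s a = 1"
  proof (rule ccontr)
    assume "Bhyp n s a \<noteq> 1"
    then have sa0: "Bhyp n s a = 0" by simp
    have "a = 0"
    proof (rule perp0)
      show "a \<in> Vsp (2*n)" using aPi Pi_V by auto
    next
      fix p assume "p \<in> Pi" then show "Bhyp n a p = 0" using aPi BPi by simp
    next
      fix h assume "h \<in> Sg"
      then have "h \<in> H \<or> (\<exists>h'\<in>H. h = h' + s)" using SgH by auto
      then show "Bhyp n a h = 0" using aH sa0 by (auto simp: Bsym[of n a] Badd)
    qed
    then show False using aK by simp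
  qed
  have HK: "H = {h\<in>Sg. Bhyp n h a = 0}"
  proof (rule card_subset_eq)
    show "finite {h\<in>Sg. Bhyp n h a = 0}" using cardSg by simp
    show "H \<subseteq> {h\<in>Sg. Bhyp n h a = 0}" using HS aH by auto
    show "card H = card {h\<in>Sg. Bhyp n h a = 0}" using finH ker_card[OF aPi sS sa] by simp
  qed
  let ?x = "a + s"
  have as1: "Bhyp n a s = 1" using sa by (simp add: Bsym)
  have xV: "?x \<in> Vsp (2*n)" using aPi sS Pi_V Sg_V by (auto intro!: Vsp_add)
  have Qx: "Qhyp n ?x = 1" using Qadd[of n a s] aPi sS tPi tSg as1 by (simp add: totally_singular_def)
  have Q0: "Qhyp n (0::vec2) = 0" by (simp add: Qhyp_def)
  have x0: "?x \<noteq> 0" using Qx Q0 by (metis zero_neq_one)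
  have "{0, ?x} \<in> nonsingular_points n"
    unfolding nonsingular_points_def using xV Qx x0 span_single[of ?x] by force
  moreover have "PH = fmap n Pi Sg {0, ?x}"
    using fmap_eq[OF aPi sS as1] PH Ps HK by simp
  ultimately show "\<exists>X\<in>nonsingular_points n. PH = fmap n Pi Sg X" by blast
qed

end

theorem mainTheorem2:
  fixes n :: nat and \<Pi> \<Sigma> :: "vec2 set"
  assumes "n \<ge> 2"
    and "subsp \<Pi>" and "\<Pi> \<subseteq> Vsp (2*n)" and "dim2 \<Pi> = n" and "totally_singular n \<Pi>"
    and "subsp \<Sigma>" and "\<Sigma> \<subseteq> Vsp (2*n)" and "dim2 \<Sigma> = n" and "totally_singular n \<Sigma>"
    and "\<Pi> \<inter> \<Sigma> = {0}"
  shows "bij_betw (fmap n \<Pi> \<Sigma>) (nonsingular_points n) (antiflags n \<Sigma>)"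
  by (rule main[OF assms])

end
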